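(* For every NBA $\mathcal A$, the relation $S(\subseteq^{\mathrm{bw\text{-}di}},\supseteq^{\mathrm{bw\text{-}di}})$ is good for saturation, i.e. $\mathcal L(\mathrm{Sat}(\mathcal A,S(\subseteq^{\mathrm{bw\text{-}di}},\supseteq^{\mathrm{bw\text{-}di}})))=\mathcal L(\mathcal A)$.
   Context: An NBA $\mathcal A=(\Sigma,Q,I,F,\delta)$, $\delta\subseteq Q\times\Sigma\times Q$, forward and backward complete; initial traces start in $I$, fair traces are infinite and visit $F$ infinitely often; the language is the set of infinite words with an initial fair trace. Backward direct trace inclusion: $p\subseteq^{\mathrm{bw\text{-}di}}q$ iff for every finite word $\sigma_0\cdots\sigma_{m-1}$ and every initial finite trace $p_0\xrightarrow{\sigma_0}\cdots\xrightarrow{\sigma_{m-1}}p_m=p$ there is an initial finite trace $q_0\xrightarrow{\sigma_0}\cdots\xrightarrow{\sigma_{m-1}}q_m=q$ with $p_i\in F\Rightarrow q_i\in F$ for $0\le i\le m$; $\supseteq^{\mathrm{bw\text{-}di}}$ is its inverse. Let $\Delta=Q\times\Sigma\times Q$; $S(R_b,R_f)=\{((p,\sigma,r),(p',\sigma,r'))\in\Delta\times\Delta:p\,R_b\,p',\ r\,R_f\,r'\}$. For reflexive $S\subseteq\Delta\times\Delta$, $\mathrm{Sat}(\mathcal A,S)=(\Sigma,Q,I,F,\{t'\in\Delta:\exists t\in\delta,(t',t)\in S\})$. Good for saturation means the language is unchanged. *)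

theory Defs
  imports Main
begin

record ('s, 'q) nba =
  alph  :: "'s set"
  states :: "'q set"
  init  :: "'q set"
  acc   :: "'q set"
  trans :: "('q \<times> 's \<times> 'q) set"

definition nba_wf :: "('s, 'q) nba \<Rightarrow> bool" where
  "nba_wf A \<longleftrightarrow> finite (alph A) \<and> finite (states A) \<and>
     init A \<subseteq> states A \<and> acc A \<subseteq> states A \<and>
     trans A \<subseteq> states A \<times> alph A \<times> states A"

definition fw_complete :: "('s, 'q) nba \<Rightarrow> bool" where
  "fw_complete A \<longleftrightarrow> (\<forall>p\<in>states A. \<forall>a\<in>alph A. \<exists>r. (p, a, r) \<in> trans A)"

definition bw_complete :: "('s, 'q) nba \<Rightarrow> bool" where
  "bw_complete A \<longleftrightarrow> (\<forall>r\<in>states A. \<forall>a\<in>alph A. \<exists>p. (p, a, r) \<in> trans A)"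

definition Delta :: "('s, 'q) nba \<Rightarrow> ('q \<times> 's \<times> 'q) set" where
  "Delta A = states A \<times> alph A \<times> states A"

definition lang :: "('s, 'q) nba \<Rightarrow> (nat \<Rightarrow> 's) set" where
  "lang A = {w. (\<forall>i. w i \<in> alph A) \<and>
     (\<exists>\<rho>. \<rho> 0 \<in> init A \<and> (\<forall>i. (\<rho> i, w i, \<rho> (Suc i)) \<in> trans A) \<and>
          (\<exists>\<^sub>\<infinity>i. \<rho> i \<in> acc A))}"

definition bw_di :: "('s, 'q) nba \<Rightarrow> ('q \<times> 'q) set" where
  "bw_di A = {(p, q). p \<in> states A \<and> q \<in> states A \<and>
     (\<forall>m (w :: nat \<Rightarrow> 's) \<rho>. (\<forall>i<m. w i \<in> alph A) \<and> \<rho> 0 \<in> init A \<and>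
        (\<forall>i<m. (\<rho> i, w i, \<rho> (Suc i)) \<in> trans A) \<and> \<rho> m = p \<longrightarrow>
        (\<exists>\<rho>'. \<rho>' 0 \<in> init A \<and> (\<forall>i<m. (\<rho>' i, w i, \<rho>' (Suc i)) \<in> trans A) \<and>
              \<rho>' m = q \<and> (\<forall>i\<le>m. \<rho> i \<in> acc A \<longrightarrow> \<rho>' i \<in> acc A)))}"

definition S_rel :: "('s, 'q) nba \<Rightarrow> ('q \<times> 'q) set \<Rightarrow> ('q \<times> 'q) set \<Rightarrow>
    (('q \<times> 's \<times> 'q) \<times> ('q \<times> 's \<times> 'q)) set" where
  "S_rel A Rb Rf = {((p, a, r), (p', a', r')). (p, a, r) \<in> Delta A \<and> (p', a', r') \<in> Delta A \<and>
      a = a' \<and> (p, p') \<in> Rb \<and> (r, r') \<in> Rf}"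

definition Sat :: "('s, 'q) nba \<Rightarrow> (('q \<times> 's \<times> 'q) \<times> ('q \<times> 's \<times> 'q)) set \<Rightarrow> ('s, 'q) nba" where
  "Sat A S = A\<lparr> trans := {t' \<in> Delta A. \<exists>t \<in> trans A. (t', t) \<in> S} \<rparr>"

end

theory Submission imports Defs "HOL-Library.Infinite_Set" begin

lemma down_closed:
  assumes dc: "\<forall>k \<sigma>. P (Suc k) \<sigma> \<longrightarrow> P k \<sigma>"
  shows "P m \<pi> \<Longrightarrow> n \<le> m \<Longrightarrow> P n \<pi>"
proof (induction m)
  case 0 then show ?case by simp
next
  case (Suc m) then show ?case using dc by (cases "n = Suc m") auto
qed

lemma infinite_union_pick:
  assumes "finite Q" "infinite M" "M \<subseteq> (\<Union>q\<in>Q. N q)"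
  shows "\<exists>q\<in>Q. infinite (N q)"
  using assms finite_subset by (metis finite_UN)

lemma koenig_gen:
  fixes P :: "nat \<Rightarrow> (nat \<Rightarrow> 'q) \<Rightarrow> bool"
  assumes fin: "finite Q"
    and dc: "\<And>m \<pi>. P (Suc m) \<pi> \<Longrightarrow> P m \<pi>"
    and ex: "\<And>m. \<exists>\<pi>. P m \<pi>"
    and inQ: "\<And>m \<pi> i. P m \<pi> \<Longrightarrow> i \<le> m \<Longrightarrow> \<pi> i \<in> Q"
    and loc: "\<And>m \<pi> \<pi>'. P m \<pi> \<Longrightarrow> (\<forall>i\<le>m. \<pi> i = \<pi>' i) \<Longrightarrow> P m \<pi>'"
  shows "\<exists>\<pi>. \<forall>m. P m \<pi>"
proof -
  define E where "E n \<pi> \<longleftrightarrow> infinite {m. \<exists>\<pi>'. P m \<pi>' \<and> (\<forall>i\<le>n. \<pi>' i = \<pi> i)}" for n \<pi>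
  have base: "\<exists>\<pi>. E 0 \<pi>"
  proof -
    have "(UNIV::nat set) \<subseteq> (\<Union>q\<in>Q. {m. \<exists>\<pi>'. P m \<pi>' \<and> \<pi>' 0 = q})"
    proof
      fix m :: nat
      obtain \<pi> where "P m \<pi>" using ex by blast
      moreover then have "\<pi> 0 \<in> Q" using inQ by blast
      ultimately show "m \<in> (\<Union>q\<in>Q. {m. \<exists>\<pi>'. P m \<pi>' \<and> \<pi>' 0 = q})" by blast
    qed
    then obtain q where "infinite {m. \<exists>\<pi>'. P m \<pi>' \<and> \<pi>' 0 = q}"
      using infinite_union_pick[OF fin infinite_UNIV_nat] by blast
    then have "E 0 (\<lambda>_. q)" unfolding E_def by simp
    then show ?thesis by blast
  qed
  have step: "\<exists>\<pi>'. E (Suc n) \<pi>' \<and> (\<forall>i\<le>n. \<pi>' i = \<pi> i)" if "E n \<pi>" for n \<pi>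
  proof -
    let ?M = "{m. \<exists>\<pi>'. P m \<pi>' \<and> (\<forall>i\<le>n. \<pi>' i = \<pi> i)} \<inter> {Suc n..}"
    have "infinite ?M"
    proof
      assume "finite ?M"
      moreover have "{m. \<exists>\<pi>'. P m \<pi>' \<and> (\<forall>i\<le>n. \<pi>' i = \<pi> i)} \<subseteq> ?M \<union> {..n}" by auto
      ultimately show False using that unfolding E_def by (meson finite_Un finite_atMost finite_subset)
    qed
    moreover have "?M \<subseteq> (\<Union>q\<in>Q. {m. \<exists>\<pi>'. P m \<pi>' \<and> (\<forall>i\<le>n. \<pi>' i = \<pi> i) \<and> \<pi>' (Suc n) = q})"
    proof
      fix m assume "m \<in> ?M"
      then obtain \<pi>' where "P m \<pi>'" "\<forall>i\<le>n. \<pi>' i = \<pi> i" "Suc n \<le> m" by auto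
      moreover then have "\<pi>' (Suc n) \<in> Q" using inQ by blast
      ultimately show "m \<in> (\<Union>q\<in>Q. {m. \<exists>\<pi>'. P m \<pi>' \<and> (\<forall>i\<le>n. \<pi>' i = \<pi> i) \<and> \<pi>' (Suc n) = q})" by blast
    qed
    ultimately obtain q where q: "infinite {m. \<exists>\<pi>'. P m \<pi>' \<and> (\<forall>i\<le>n. \<pi>' i = \<pi> i) \<and> \<pi>' (Suc n) = q}"
      using infinite_union_pick[OF fin] by blast
    have "{m. \<exists>\<pi>'. P m \<pi>' \<and> (\<forall>i\<le>n. \<pi>' i = \<pi> i) \<and> \<pi>' (Suc n) = q}
       \<subseteq> {m. \<exists>\<pi>'. P m \<pi>' \<and> (\<forall>i\<le>Suc n. \<pi>' i = (\<pi>(Suc n := q)) i)}"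
      by (auto simp: le_Suc_eq)
    then have "E (Suc n) (\<pi>(Suc n := q))" using q unfolding E_def using finite_subset by blast
    then show ?thesis by auto
  qed
  define f where "f = rec_nat (SOME \<pi>. E 0 \<pi>) (\<lambda>n \<pi>. SOME \<pi>'. E (Suc n) \<pi>' \<and> (\<forall>i\<le>n. \<pi>' i = \<pi> i))"
  have f0: "f 0 = (SOME \<pi>. E 0 \<pi>)" and fS: "f (Suc n) = (SOME \<pi>'. E (Suc n) \<pi>' \<and> (\<forall>i\<le>n. \<pi>' i = f n i))" for n
    unfolding f_def by simp_all
  have fS': "E (Suc n) (f (Suc n)) \<and> (\<forall>i\<le>n. f (Suc n) i = f n i)" if "E n (f n)" for n
    unfolding fS by (rule someI_ex[OF step[OF that]])
  have fE0: "E n (f n)" for n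
  proof (induction n)
    case 0 show ?case unfolding f0 by (rule someI_ex[OF base])
  next
    case (Suc n) then show ?case using fS' by blast
  qed
  have fE: "E n (f n) \<and> (\<forall>i\<le>n. f (Suc n) i = f n i)" for n
    using fE0 fS' by blast
  have agree: "\<forall>i\<le>n. f n i = f i i" for n
  proof (induction n)
    case 0 then show ?case by simp
  next
    case (Suc n) then show ?case using fE by (metis le_Suc_eq)
  qed
  have "P n (\<lambda>i. f i i)" for n
  proof -
    have "infinite {m. \<exists>\<pi>'. P m \<pi>' \<and> (\<forall>i\<le>n. \<pi>' i = f n i)}" using fE unfolding E_def by blast
    then obtain m where "m \<in> {m. \<exists>\<pi>'. P m \<pi>' \<and> (\<forall>i\<le>n. \<pi>' i = f n i)}" "n \<le> m"
      by (meson finite_atMost infinite_nat_iff_unbounded_le)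
    then obtain \<pi>' where "P m \<pi>'" "\<forall>i\<le>n. \<pi>' i = f n i" by blast
    then have "P n \<pi>'" using down_closed[of P m \<pi>' n] dc \<open>n \<le> m\<close> by blast
    then show ?thesis using loc \<open>\<forall>i\<le>n. \<pi>' i = f n i\<close> agree by metis
  qed
  then show ?thesis by blast
qed


lemma bw_di_refl:
  assumes "p \<in> states A" shows "(p, p) \<in> bw_di A"
  unfolding bw_di_def using assms by blast

lemma bw_diD:
  assumes "(p, q) \<in> bw_di A" "\<forall>i<m. w i \<in> alph A" "\<rho> 0 \<in> init A"
    "\<forall>i<m. (\<rho> i, w i, \<rho> (Suc i)) \<in> trans A" "\<rho> m = p"
  shows "\<exists>\<rho>'. \<rho>' 0 \<in> init A \<and> (\<forall>i<m. (\<rho>' i, w i, \<rho>' (Suc i)) \<in> trans A) \<and>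
              \<rho>' m = q \<and> (\<forall>i\<le>m. \<rho> i \<in> acc A \<longrightarrow> \<rho>' i \<in> acc A)"
  using assms unfolding bw_di_def by blast

lemma Sat_simps[simp]: "alph (Sat A S) = alph A" "init (Sat A S) = init A" "acc (Sat A S) = acc A"
  "states (Sat A S) = states A"
  unfolding Sat_def by simp_all

lemma Sat_trans: "trans (Sat A S) = {t' \<in> Delta A. \<exists>t \<in> trans A. (t', t) \<in> S}"
  unfolding Sat_def by simp

lemma finite_prefix:
  assumes w: "\<forall>i. w i \<in> alph A" and r0: "\<rho> 0 \<in> init A"
    and rt: "\<forall>i. (\<rho> i, w i, \<rho> (Suc i)) \<in> trans (Sat A (S_rel A (bw_di A) ((bw_di A)\<inverse>)))"
  shows "\<exists>\<pi>. \<pi> 0 \<in> init A \<and> (\<forall>i<m. (\<pi> i, w i, \<pi> (Suc i)) \<in> trans A) \<and> \<pi> m = \<rho> m \<and>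
          (\<forall>i\<le>m. \<rho> i \<in> acc A \<longrightarrow> \<pi> i \<in> acc A)"
proof (induction m)
  case 0 show ?case using r0 by (intro exI[of _ \<rho>]) auto
next
  case (Suc m)
  then obtain \<pi> where \<pi>: "\<pi> 0 \<in> init A" "\<forall>i<m. (\<pi> i, w i, \<pi> (Suc i)) \<in> trans A" "\<pi> m = \<rho> m"
    "\<forall>i\<le>m. \<rho> i \<in> acc A \<longrightarrow> \<pi> i \<in> acc A" by blast
  from rt[rule_format, of m] obtain p' a' r' where t: "(p', a', r') \<in> trans A"
    and S: "((\<rho> m, w m, \<rho> (Suc m)), (p', a', r')) \<in> S_rel A (bw_di A) ((bw_di A)\<inverse>)"
    unfolding Sat_trans by auto
  from S have a': "a' = w m" and b1: "(\<rho> m, p') \<in> bw_di A" and b2: "(r', \<rho> (Suc m)) \<in> bw_di A"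
    unfolding S_rel_def by auto
  obtain \<pi>1 where \<pi>1: "\<pi>1 0 \<in> init A" "\<forall>i<m. (\<pi>1 i, w i, \<pi>1 (Suc i)) \<in> trans A" "\<pi>1 m = p'"
    "\<forall>i\<le>m. \<pi> i \<in> acc A \<longrightarrow> \<pi>1 i \<in> acc A"
    using bw_diD[OF b1, of m w \<pi>] w \<pi> by blast
  define \<pi>2 where "\<pi>2 = \<pi>1(Suc m := r')"
  have \<pi>2: "\<pi>2 0 \<in> init A" "\<forall>i<Suc m. (\<pi>2 i, w i, \<pi>2 (Suc i)) \<in> trans A" "\<pi>2 (Suc m) = r'"
    "\<forall>i\<le>m. \<pi>2 i = \<pi>1 i"
    using \<pi>1 t a' unfolding \<pi>2_def by (auto simp: less_Suc_eq)
  obtain \<pi>3 where \<pi>3: "\<pi>3 0 \<in> init A" "\<forall>i<Suc m. (\<pi>3 i, w i, \<pi>3 (Suc i)) \<in> trans A"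
    "\<pi>3 (Suc m) = \<rho> (Suc m)" "\<forall>i\<le>Suc m. \<pi>2 i \<in> acc A \<longrightarrow> \<pi>3 i \<in> acc A"
    using bw_diD[OF b2, of "Suc m" w \<pi>2] w \<pi>2 by blast
  have "\<forall>i\<le>Suc m. \<rho> i \<in> acc A \<longrightarrow> \<pi>3 i \<in> acc A"
    using \<pi>3(3,4) \<pi>(4) \<pi>1(4) \<pi>2(4) by (metis le_Suc_eq)
  then show ?case using \<pi>3 by blast
qed

theorem theorem10p6:
  fixes A :: "('s, 'q) nba"
  assumes "nba_wf A" and "fw_complete A" and "bw_complete A"
  shows "lang (Sat A (S_rel A (bw_di A) ((bw_di A)\<inverse>))) = lang A"
proof
  have tD: "trans A \<subseteq> Delta A" using assms(1) unfolding nba_wf_def Delta_def by blast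
  show "lang A \<subseteq> lang (Sat A (S_rel A (bw_di A) ((bw_di A)\<inverse>)))"
  proof
    fix w assume "w \<in> lang A"
    then obtain \<rho> where w: "\<forall>i. w i \<in> alph A" and \<rho>: "\<rho> 0 \<in> init A"
      "\<forall>i. (\<rho> i, w i, \<rho> (Suc i)) \<in> trans A" "\<exists>\<^sub>\<infinity>i. \<rho> i \<in> acc A"
      unfolding lang_def by blast
    have "(t, t) \<in> S_rel A (bw_di A) ((bw_di A)\<inverse>)" if "t \<in> trans A" for t
      using that tD bw_di_refl[of _ A] unfolding S_rel_def Delta_def by fastforce
    then have "trans A \<subseteq> trans (Sat A (S_rel A (bw_di A) ((bw_di A)\<inverse>)))"
      unfolding Sat_trans using tD by blast
    then show "w \<in> lang (Sat A (S_rel A (bw_di A) ((bw_di A)\<inverse>)))"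
      unfolding lang_def using w \<rho> by auto
  qed
  show "lang (Sat A (S_rel A (bw_di A) ((bw_di A)\<inverse>))) \<subseteq> lang A"
  proof
    fix w assume "w \<in> lang (Sat A (S_rel A (bw_di A) ((bw_di A)\<inverse>)))"
    then obtain \<rho> where w: "\<forall>i. w i \<in> alph A" and \<rho>: "\<rho> 0 \<in> init A"
      "\<forall>i. (\<rho> i, w i, \<rho> (Suc i)) \<in> trans (Sat A (S_rel A (bw_di A) ((bw_di A)\<inverse>)))"
      "\<exists>\<^sub>\<infinity>i. \<rho> i \<in> acc A"
      unfolding lang_def by auto
    define P where "P m \<pi> \<longleftrightarrow> \<pi> 0 \<in> init A \<and> (\<forall>i<m. (\<pi> i, w i, \<pi> (Suc i)) \<in> trans A) \<and>
          (\<forall>i\<le>m. \<rho> i \<in> acc A \<longrightarrow> \<pi> i \<in> acc A)" for m \<pi>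
    have "\<exists>\<pi>. \<forall>m. P m \<pi>"
    proof (rule koenig_gen[of "states A"])
      show "finite (states A)" using assms(1) unfolding nba_wf_def by blast
      show "P m \<pi>" if "P (Suc m) \<pi>" for m \<pi> using that unfolding P_def by auto
      show "\<exists>\<pi>. P m \<pi>" for m using finite_prefix[OF w \<rho>(1,2), of m] unfolding P_def by blast
      show "\<pi> i \<in> states A" if "P m \<pi>" "i \<le> m" for m \<pi> i
      proof (cases i)
        case 0 then show ?thesis using that assms(1) unfolding P_def nba_wf_def by blast
      next
        case (Suc j)
        then have "(\<pi> j, w j, \<pi> i) \<in> trans A" using that unfolding P_def by auto
        then show ?thesis using tD unfolding Delta_def by blast
      qed
      show "P m \<pi>'" if "P m \<pi>" "\<forall>i\<le>m. \<pi> i = \<pi>' i" for m \<pi> \<pi>'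
        using that unfolding P_def by (metis less_eq_Suc_le less_imp_le_nat zero_le)
    qed
    then obtain \<pi> where \<pi>: "\<forall>m. P m \<pi>" by blast
    have "\<pi> 0 \<in> init A" using \<pi> unfolding P_def by blast
    moreover have "\<forall>i. (\<pi> i, w i, \<pi> (Suc i)) \<in> trans A" using \<pi> unfolding P_def by blast
    moreover have "\<exists>\<^sub>\<infinity>i. \<pi> i \<in> acc A"
      using \<rho>(3) by (rule frequently_elim1) (use \<pi> in \<open>auto simp: P_def\<close>)
    ultimately show "w \<in> lang A" unfolding lang_def using w by blast
  qed
qed

end
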